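(* Let $k\ge3$ and let $p_1<\dots<p_k$ be odd primes. Then $$C_{p_1\cdots p_k}\le p_1\cdots p_{k-2}\cdot A_{p_1\cdots p_{k-1}}\cdot C_{p_1\cdots p_{k-1}},$$ and consequently $\epsilon_k^{inv}\le\epsilon_2\epsilon_3\cdots\epsilon_{k-1}$.
   Context: $\Phi_n$ is the $n$-th cyclotomic polynomial, $A_n$ the maximum absolute value of its coefficients; $\Psi_n(x)=1/\Phi_n(x)=\sum_{m\ge0}c_n(m)x^m$ as a formal power series and $C_n=\max_m|c_n(m)|$. For odd primes $p_1<\dots<p_k$, $M_k=\prod_{i=1}^{k-2}p_i^{2^{k-i-1}-1}$; $\epsilon_k$ (resp. $\epsilon_k^{inv}$) is the smallest positive real with $A_{p_1\cdots p_k}\le\epsilon_kM_k$ (resp. $C_{p_1\cdots p_k}\le\epsilon_k^{inv}M_k$) for all odd primes $p_1<\dots<p_k$. *)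

theory Defs
  imports "HOL-Analysis.Analysis" "HOL-Computational_Algebra.Polynomial_FPS"
begin

definition cyclo :: "nat \<Rightarrow> complex poly" where
  "cyclo n = (\<Prod>j\<in>{j\<in>{1..n}. coprime j n}. [:- cis (2 * pi * real j / real n), 1:])"

definition A_cyc :: "nat \<Rightarrow> real" where
  "A_cyc n = Max {norm (coeff (cyclo n) i) | i. i \<le> degree (cyclo n)}"

definition Psi :: "nat \<Rightarrow> complex fps" where
  "Psi n = inverse (fps_of_poly (cyclo n))"

definition C_cyc :: "nat \<Rightarrow> ereal" where
  "C_cyc n = (SUP m. ereal (norm (fps_nth (Psi n) m)))"

definition odd_primes_incr :: "nat \<Rightarrow> (nat \<Rightarrow> nat) \<Rightarrow> bool" where
  "odd_primes_incr k p \<longleftrightarrow> (\<forall>i\<in>{1..k}. prime (p i) \<and> odd (p i)) \<and>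
     (\<forall>i j. 1 \<le> i \<longrightarrow> i < j \<longrightarrow> j \<le> k \<longrightarrow> p i < p j)"

definition M_k :: "nat \<Rightarrow> (nat \<Rightarrow> nat) \<Rightarrow> nat" where
  "M_k k p = (\<Prod>i=1..k-2. p i ^ (2 ^ (k - i - 1) - 1))"

text \<open>epsilon_k and epsilon_k^inv: least admissible constants = supremum of the ratios.\<close>
definition eps_A :: "nat \<Rightarrow> ereal" where
  "eps_A k = (SUP p\<in>{p. odd_primes_incr k p}. ereal (A_cyc (\<Prod>i=1..k. p i) / real (M_k k p)))"

definition eps_inv :: "nat \<Rightarrow> ereal" where
  "eps_inv k = (SUP p\<in>{p. odd_primes_incr k p}. C_cyc (\<Prod>i=1..k. p i) / ereal (real (M_k k p)))"

end

theory Submission imports Defs begin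

unbundle no vec_syntax
notation fps_nth (infixl \<open>$\<close> 75)



definition zeta :: "nat \<Rightarrow> nat \<Rightarrow> complex" where
  "zeta N j = cis (2 * pi * real j / real N)"

lemma linprod_degree:
  "finite X \<Longrightarrow> degree (\<Prod>x\<in>X. [:- f x, 1:] :: complex poly) = card X"
  by (subst degree_prod_eq_sum_degree) auto

lemma linprod_lead:
  "lead_coeff (\<Prod>x\<in>X. [:- f x, 1:] :: complex poly) = 1"
  by (simp add: lead_coeff_prod)

lemma linprod_coeff0:
  "coeff (\<Prod>x\<in>X. [:- f x, 1:] :: complex poly) 0 = (\<Prod>x\<in>X. - f x)"
  by (simp add: poly_0_coeff_0[symmetric] poly_prod)

lemma zeta_inj:
  assumes "q > 0" "s < q" "t < q" "zeta q s = zeta q t" shows "s = t"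
  using Complex.bij_betw_roots_unity[OF assms(1)] assms unfolding bij_betw_def inj_on_def zeta_def by auto

lemma zeta_pow: "q > 0 \<Longrightarrow> zeta q t ^ q = 1"
proof -
  assume q: "q > 0"
  have "real q * (2 * pi * real t / real q) = 2*pi*real t" using q by simp
  note e = this
  have "zeta q t ^ q = cis (real q * (2*pi*real t/real q))" unfolding zeta_def by (rule Complex.DeMoivre)
  also have "\<dots> = cis (2*pi*real t)" by (simp only: e)
  also have "\<dots> = 1" by (metis cis_multiple_2pi Ints_of_nat of_real_of_nat_eq)
  finally show ?thesis .
qed

lemma factor_F:
  fixes a :: complex
  assumes q: "q > 0"
  shows "(\<Prod>t<q. [:-(a * zeta q t), 1:]) = monom 1 q - [:a^q:]"
proof (cases "a = 0")
  case True
  then show ?thesis using q by (simp add: monom_altdef)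
next
  case False
  let ?P = "(\<Prod>t<q. [:-(a * zeta q t), 1:])"
  have dP: "degree ?P = q" using linprod_degree[of "{..<q}"] by simp
  have dM: "degree (monom 1 q - [:a^q:] :: complex poly) \<le> q"
    by (rule order.trans[OF degree_diff_le_max]) (auto simp: degree_monom_le)
  have cP: "coeff ?P q = 1" using linprod_lead[of "\<lambda>t. a * zeta q t" "{..<q}"] dP by simp
  have cM: "coeff (monom 1 q - [:a^q:] :: complex poly) q = 1" using q by (simp add: coeff_pCons split: nat.split)
  have inj: "inj_on (\<lambda>t. a * zeta q t) {..<q}"
    using zeta_inj[OF q] False by (auto simp: inj_on_def)
  show ?thesis
  proof (rule poly_eqI_degree_lead_coeff[where n=q and A="(\<lambda>t. a * zeta q t) ` {..<q}"])
    show "coeff ?P q = coeff (monom 1 q - [:a^q:]) q" using cP cM by simp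
    show "q \<le> card ((\<lambda>t. a * zeta q t) ` {..<q})" using card_image[OF inj] by simp
    show "degree ?P \<le> q" using dP by simp
    show "degree (monom 1 q - [:a ^ q:]) \<le> q" by fact
    fix z assume "z \<in> (\<lambda>t. a * zeta q t) ` {..<q}"
    then obtain t where t: "t < q" "z = a * zeta q t" by auto
    have "poly ?P z = 0" using t by (auto simp: poly_prod)
    moreover have "poly (monom 1 q - [:a^q:]) z = 0"
      using t zeta_pow[OF q, of t] by (simp add: poly_monom power_mult_distrib)
    ultimately show "poly ?P z = poly (monom 1 q - [:a^q:]) z" by simp
  qed
qed




definition Sset :: "nat \<Rightarrow> nat set" where "Sset N = {j\<in>{1..N}. coprime j N}"

lemma cyclo_def': "cyclo N = (\<Prod>j\<in>Sset N. [:- zeta N j, 1:])"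
  unfolding cyclo_def Sset_def zeta_def ..

lemma coprime_add_mult_nat: "coprime (j + m * t) m \<longleftrightarrow> coprime (j::nat) m"
  by (smt (verit, ccfv_SIG) coprime_def dvd_add_left_iff dvd_mult mult.commute)

lemma coprime_prime_iff: "prime (q::nat) \<Longrightarrow> coprime u q \<longleftrightarrow> \<not> q dvd u"
  by (metis coprime_common_divisor_nat prime_imp_coprime coprime_commute dvd_refl not_prime_1)

lemma coprime_qv: "prime (q::nat) \<Longrightarrow> \<not> q dvd m \<Longrightarrow> coprime (q * v) m \<longleftrightarrow> coprime v m"
  by (metis coprime_mult_left_iff prime_imp_coprime_nat)

lemma zeta_mult:
  assumes "m > 0" "q > 0"
  shows "zeta (m*q) j * zeta q t = zeta (m*q) (j + m*t)"
proof -
  have "2 * pi * real j / real (m*q) + 2 * pi * real t / real q = 2 * pi * real (j + m*t) / real (m*q)"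
    using assms by (simp add: field_simps)
  then show ?thesis unfolding zeta_def cis_mult by simp
qed

lemma zeta_pow_q:
  assumes "m > 0" "q > 0"
  shows "zeta (m*q) j ^ q = zeta m j"
proof -
  have e: "real q * (2 * pi * real j / real (m*q)) = 2 * pi * real j / real m"
    using assms by (simp add: field_simps)
  show ?thesis unfolding zeta_def Complex.DeMoivre e ..
qed

lemma zeta_qv:
  assumes "m > 0" "q > 0"
  shows "zeta (m*q) (q * v) = zeta m v"
proof -
  have e: "2 * pi * real (q * v) / real (m*q) = 2 * pi * real v / real m"
    using assms by (simp add: field_simps)
  show ?thesis unfolding zeta_def e ..
qed

lemma key_identity:
  assumes m: "m > 0" and q: "prime q" and nd: "\<not> q dvd m"
  shows "cyclo (m*q) * cyclo m = (\<Prod>j\<in>Sset m. monom 1 q - [:zeta m j:])"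
proof -
  have q0: "q > 0" using q prime_gt_0_nat by blast
  define T where "T = {u\<in>{1..m*q}. coprime u m}"
  define V where "V = {u\<in>{1..m*q}. coprime u m \<and> q dvd u}"
  have "(\<Prod>j\<in>Sset m. monom 1 q - [:zeta m j:])
        = (\<Prod>j\<in>Sset m. \<Prod>t<q. [:-(zeta (m*q) (j + m*t)), 1:])"
  proof (rule prod.cong[OF refl])
    fix j
    show "monom 1 q - [:zeta m j:] = (\<Prod>t<q. [:-(zeta (m*q) (j + m*t)), 1:])"
      using factor_F[OF q0, of "zeta (m*q) j"] zeta_pow_q[OF m q0, of j] zeta_mult[OF m q0, of j]
      by simp
  qed
  also have "\<dots> = (\<Prod>x\<in>Sset m \<times> {..<q}. [:-(zeta (m*q) (fst x + m * snd x)), 1:])"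
    by (subst prod.cartesian_product) (simp add: case_prod_beta)
  also have "\<dots> = (\<Prod>u\<in>T. [:-(zeta (m*q) u), 1:])"
  proof (rule prod.reindex_bij_betw[where h="\<lambda>x. fst x + m * snd x"])
    show "bij_betw (\<lambda>x. fst x + m * snd x) (Sset m \<times> {..<q}) T"
    proof (rule bij_betw_byWitness[where f'="\<lambda>u. ((u - 1) mod m + 1, (u - 1) div m)"])
      show "\<forall>a\<in>Sset m \<times> {..<q}. ((fst a + m * snd a - 1) mod m + 1, (fst a + m * snd a - 1) div m) = a"
      proof
        fix a assume a: "a \<in> Sset m \<times> {..<q}"
        obtain j t where [simp]: "a = (j, t)" by force
        have j: "1 \<le> j" "j \<le> m" using a by (auto simp: Sset_def)
        have e: "j + m*t - 1 = (j - 1) + m * t" using j by simp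
        have jm: "j - 1 < m" using j by simp
        have "((j - 1) + m * t) mod m = j - 1" using jm by simp
        moreover have "((j - 1) + m * t) div m = t" using jm by simp
        ultimately show "((fst a + m * snd a - 1) mod m + 1, (fst a + m * snd a - 1) div m) = a"
          using j e by simp
      qed
      show "\<forall>a'\<in>T. fst ((a' - 1) mod m + 1, (a' - 1) div m) + m * snd ((a' - 1) mod m + 1, (a' - 1) div m) = a'"
        by (auto simp: T_def)
      show "(\<lambda>x. fst x + m * snd x) ` (Sset m \<times> {..<q}) \<subseteq> T"
      proof
        fix u assume "u \<in> (\<lambda>x. fst x + m * snd x) ` (Sset m \<times> {..<q})"
        then obtain j t where jt: "j \<in> Sset m" "t < q" "u = j + m * t" by auto
        have "j + m * t \<le> m + m * (q - 1)" using jt by (intro add_mono) (auto simp: Sset_def)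
        also have "\<dots> = m * q" using q0 by (simp add: algebra_simps)
        finally show "u \<in> T" using jt by (auto simp: T_def Sset_def coprime_add_mult_nat)
      qed
      show "(\<lambda>u. ((u - 1) mod m + 1, (u - 1) div m)) ` T \<subseteq> Sset m \<times> {..<q}"
      proof
        fix u assume "u \<in> (\<lambda>u. ((u - 1) mod m + 1, (u - 1) div m)) ` T"
        then obtain v where v: "v \<in> T" "u = ((v - 1) mod m + 1, (v - 1) div m)" by auto
        have v1: "v \<ge> 1" "v \<le> m*q" "coprime v m" using v by (auto simp: T_def)
        have d: "(v - 1) div m < q" using v1 m by (simp add: div_less_iff_less_mult mult.commute)
        have "v = ((v - 1) mod m + 1) + m * ((v-1) div m)" using v1 by simp
        then have "coprime ((v - 1) mod m + 1) m" using v1(3) coprime_add_mult_nat by metis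
        moreover have "(v - 1) mod m + 1 \<le> m" using m by (simp add: Suc_le_eq)
        ultimately show "u \<in> Sset m \<times> {..<q}" using v d by (auto simp: Sset_def)
      qed
    qed
  qed
  also have "T = Sset (m*q) \<union> V"
  proof -
    have "u \<in> T \<longleftrightarrow> u \<in> Sset (m*q) \<union> V" for u
      using coprime_prime_iff[OF q, of u] unfolding T_def V_def Sset_def coprime_mult_right_iff
      by blast
    then show ?thesis by blast
  qed
  also have "(\<Prod>u\<in>Sset (m*q) \<union> V. [:-(zeta (m*q) u), 1:])
       = (\<Prod>u\<in>Sset (m*q). [:-(zeta (m*q) u), 1:]) * (\<Prod>u\<in>V. [:-(zeta (m*q) u), 1:])"
    by (rule prod.union_disjoint) (auto simp: Sset_def V_def coprime_prime_iff[OF q])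
  also have "(\<Prod>u\<in>V. [:-(zeta (m*q) u), 1:]) = (\<Prod>v\<in>Sset m. [:-(zeta (m*q) (q * v)), 1:])"
  proof (rule prod.reindex_bij_betw[symmetric, where h="\<lambda>v. q * v"])
    show "bij_betw ((*) q) (Sset m) V"
    proof (rule bij_betw_byWitness[where f'="\<lambda>u. u div q"])
      show "\<forall>a\<in>Sset m. q * a div q = a" using q0 by simp
      show "\<forall>a'\<in>V. q * (a' div q) = a'" by (auto simp: V_def)
      show "(*) q ` Sset m \<subseteq> V" using q0 q nd
        by (auto simp: Sset_def V_def coprime_qv prime_imp_coprime)
      show "(\<lambda>u. u div q) ` V \<subseteq> Sset m"
      proof
        fix x assume "x \<in> (\<lambda>u. u div q) ` V"
        then obtain u where u: "u \<in> V" "x = u div q" by auto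
        then obtain v where v: "u = q * v" by (auto simp: V_def)
        have x: "x = v" using u v q0 by simp
        have "1 \<le> q * v" "q * v \<le> m * q" "coprime (q * v) m" using u v by (auto simp: V_def)
        then have "1 \<le> v" "v \<le> m" "coprime v m" using coprime_qv[OF q nd] q0
          by (auto simp: mult.commute[of m])
        then show "x \<in> Sset m" using x by (simp add: Sset_def)
      qed
    qed
  qed
  also have "\<dots> = cyclo m" unfolding cyclo_def' using zeta_qv[OF m q0] by simp
  finally show ?thesis unfolding cyclo_def' by simp
qed






definition spread :: "nat \<Rightarrow> complex fps \<Rightarrow> complex fps" where
  "spread q a = Abs_fps (\<lambda>n. if q dvd n then a $ (n div q) else 0)"

lemma spread_nth: "spread q a $ n = (if q dvd n then a $ (n div q) else 0)"
  by (simp add: spread_def)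

lemma spread_mult:
  assumes q: "q > 0"
  shows "spread q (a * b) = spread q a * spread q b"
proof (rule fps_ext)
  fix n
  have "(spread q a * spread q b) $ n = (\<Sum>i=0..n. spread q a $ i * spread q b $ (n - i))"
    by (rule fps_mult_nth)
  also have "\<dots> = (\<Sum>i\<in>{i\<in>{0..n}. q dvd i}. spread q a $ i * spread q b $ (n - i))"
    by (subst sum.inter_filter, simp, rule sum.cong) (auto simp: spread_nth)
  finally have eq: "(spread q a * spread q b) $ n = (\<Sum>i\<in>{i\<in>{0..n}. q dvd i}. spread q a $ i * spread q b $ (n - i))" .
  show "spread q (a * b) $ n = (spread q a * spread q b) $ n"
  proof (cases "q dvd n")
    case False
    have "spread q a $ i * spread q b $ (n - i) = 0" if "i \<in> {i\<in>{0..n}. q dvd i}" for i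
    proof -
      from that have "q dvd i" "i \<le> n" by auto
      then have "\<not> q dvd (n - i)" using False
        by (metis dvd_add_right_iff le_add_diff_inverse)
      then show ?thesis by (simp add: spread_nth)
    qed
    then have z: "(spread q a * spread q b) $ n = 0" unfolding eq by (intro sum.neutral) blast
    then show ?thesis using False by (simp add: spread_nth)
  next
    case True
    then obtain r where r: "n = q * r" by auto
    have img: "{i\<in>{0..n}. q dvd i} = (\<lambda>s. q * s) ` {0..r}"
    proof
      show "{i\<in>{0..n}. q dvd i} \<subseteq> (\<lambda>s. q * s) ` {0..r}"
        using q r by (auto elim!: dvdE)
      show "(\<lambda>s. q * s) ` {0..r} \<subseteq> {i\<in>{0..n}. q dvd i}"
        using r by auto
    qed
    have inj: "inj_on (\<lambda>s. q * s) {0..r}" using q by (auto simp: inj_on_def)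
    have "(\<Sum>i\<in>{i\<in>{0..n}. q dvd i}. spread q a $ i * spread q b $ (n - i))
        = (\<Sum>s=0..r. spread q a $ (q * s) * spread q b $ (n - q * s))"
      unfolding img by (subst sum.reindex[OF inj]) simp
    also have "\<dots> = (\<Sum>s=0..r. a $ s * b $ (r - s))"
    proof (rule sum.cong[OF refl])
      fix s assume "s \<in> {0..r}"
      then have "n - q * s = q * (r - s)" using r by (simp add: right_diff_distrib')
      then show "spread q a $ (q * s) * spread q b $ (n - q * s) = a $ s * b $ (r - s)"
        using q by (simp add: spread_nth)
    qed
    also have "\<dots> = (a * b) $ r" by (simp add: fps_mult_nth)
    finally show ?thesis using eq r q by (simp add: spread_nth)
  qed
qed

lemma spread_one: "q > 0 \<Longrightarrow> spread q 1 = 1"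
  by (rule fps_ext) (auto simp: spread_nth elim!: dvdE)

lemma spread_prod:
  assumes "q > 0"
  shows "spread q (\<Prod>x\<in>A. f x) = (\<Prod>x\<in>A. spread q (f x))"
proof (induction A rule: infinite_finite_induct)
  case (infinite A) then show ?case using spread_one[OF assms] by simp
next
  case empty then show ?case using spread_one[OF assms] by simp
next
  case (insert x F) then show ?case using spread_mult[OF assms] by simp
qed

lemma spread_lin:
  assumes q: "q > 0"
  shows "fps_of_poly (monom 1 q - [:c:]) = spread q (fps_of_poly [:-c, 1:])"
proof (rule fps_ext)
  fix n
  show "fps_of_poly (monom 1 q - [:c:]) $ n = spread q (fps_of_poly [:-c, 1:]) $ n"
  proof (cases "q dvd n")
    case True
    then obtain r where r: "n = q * r" by auto
    show ?thesis using q r by (cases r) (auto simp: spread_nth coeff_monom coeff_pCons split: nat.split)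
  next
    case False
    then have "n \<noteq> 0" "n \<noteq> q" by (metis dvd_0_right, metis dvd_refl)
    then show ?thesis using False by (auto simp: spread_nth coeff_monom coeff_pCons split: nat.split)
  qed
qed

lemma finite_Sset[simp]: "finite (Sset N)" unfolding Sset_def by simp

lemma cyclo_coeff0: "coeff (cyclo N) 0 \<noteq> 0"
  unfolding cyclo_def' linprod_coeff0 by (subst prod_zero_iff) (auto simp: zeta_def)

lemma Psi_rel:
  assumes m: "m > 0" and q: "prime q" and nd: "\<not> q dvd m"
  shows "Psi (m*q) = fps_of_poly (cyclo m) * spread q (Psi m)"
proof -
  have q0: "q > 0" using q prime_gt_0_nat by blast
  define F where "F = fps_of_poly (cyclo m)"
  have F0: "F $ 0 \<noteq> 0" using cyclo_coeff0 by (simp add: F_def)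
  have "fps_of_poly (cyclo (m*q)) * F = fps_of_poly (\<Prod>j\<in>Sset m. monom 1 q - [:zeta m j:])"
    unfolding F_def key_identity[OF m q nd, symmetric] fps_of_poly_mult ..
  also have "\<dots> = (\<Prod>j\<in>Sset m. spread q (fps_of_poly [:-zeta m j, 1:]))"
    unfolding fps_of_poly_prod spread_lin[OF q0] ..
  also have "\<dots> = spread q F"
    unfolding F_def cyclo_def' fps_of_poly_prod spread_prod[OF q0] ..
  finally have e: "fps_of_poly (cyclo (m*q)) * F = spread q F" .
  have "fps_of_poly (cyclo (m*q)) * (F * spread q (Psi m)) = spread q F * spread q (Psi m)"
    using e by (simp add: mult.assoc[symmetric])
  also have "\<dots> = spread q (F * Psi m)" using spread_mult[OF q0] by simp
  also have "F * Psi m = 1" unfolding Psi_def F_def[symmetric] using inverse_mult_eq_1'[OF F0] .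
  finally have "fps_of_poly (cyclo (m*q)) * (F * spread q (Psi m)) = 1" using spread_one[OF q0] by simp
  then show ?thesis unfolding Psi_def F_def by (rule fps_inverse_unique)
qed






lemma degree_cyclo: "degree (cyclo m) = card (Sset m)"
  unfolding cyclo_def' by (rule linprod_degree) simp

lemma degree_cyclo_le: "degree (cyclo m) \<le> m"
proof -
  have "card (Sset m) \<le> card {1..m}" by (rule card_mono) (auto simp: Sset_def)
  then show ?thesis by (simp add: degree_cyclo)
qed

lemma lead_cyclo: "coeff (cyclo m) (degree (cyclo m)) = 1"
  unfolding cyclo_def' by (rule linprod_lead)

lemma A_set: "{norm (coeff (cyclo n) i) | i. i \<le> degree (cyclo n)} = (\<lambda>i. norm (coeff (cyclo n) i)) ` {..degree (cyclo n)}"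
  by auto

lemma A_ge: "norm (coeff (cyclo m) i) \<le> A_cyc m"
proof (cases "i \<le> degree (cyclo m)")
  case True
  then show ?thesis unfolding A_cyc_def A_set by (intro Max_ge) auto
next
  case False
  then have "coeff (cyclo m) i = 0" by (simp add: coeff_eq_0)
  moreover have "norm (coeff (cyclo m) 0) \<le> A_cyc m" unfolding A_cyc_def A_set by (intro Max_ge) auto
  ultimately show ?thesis by (metis norm_ge_zero norm_zero order.trans)
qed

lemma A_ge1: "1 \<le> A_cyc m"
  using A_ge[of m "degree (cyclo m)"] lead_cyclo by simp

lemma C_ge: "ereal (norm (Psi m $ n)) \<le> C_cyc m"
  unfolding C_cyc_def by (rule SUP_upper) simp

lemma card_residue_bound:
  fixes d j q N :: nat
  assumes q: "q > 0" and dN: "d < N * q"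
  shows "card {i\<in>{0..j}. i \<le> d \<and> q dvd (j - i)} \<le> N"
proof -
  let ?I = "{i\<in>{0..j}. i \<le> d \<and> q dvd (j - i)}"
  have inj: "inj_on (\<lambda>i. i div q) ?I"
  proof (rule inj_onI)
    fix x y assume x: "x \<in> ?I" and y: "y \<in> ?I" and e: "x div q = y div q"
    have "x mod q = j mod q" using x mod_eq_dvd_iff_nat[of x j q] by auto
    moreover have "y mod q = j mod q" using y mod_eq_dvd_iff_nat[of y j q] by auto
    ultimately show "x = y" using e by (metis div_mult_mod_eq)
  qed
  have sub: "(\<lambda>i. i div q) ` ?I \<subseteq> {..<N}"
  proof
    fix z assume "z \<in> (\<lambda>i. i div q) ` ?I"
    then obtain i where i: "i \<le> d" "z = i div q" by auto
    then have "i < N * q" using dN by simp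
    then show "z \<in> {..<N}" using i q by (simp add: div_less_iff_less_mult)
  qed
  have "card ?I = card ((\<lambda>i. i div q) ` ?I)" by (rule card_image[OF inj, symmetric])
  also have "\<dots> \<le> card {..<N}" by (rule card_mono[OF _ sub]) simp
  finally show ?thesis by simp
qed

lemma C_rel:
  assumes m: "m > 0" and q: "prime q" and nd: "\<not> q dvd m" and dN: "degree (cyclo m) < N * q"
  shows "C_cyc (m*q) \<le> ereal (real N) * ereal (A_cyc m) * C_cyc m"
proof -
  have q0: "q > 0" using q prime_gt_0_nat by blast
  have N1: "N \<ge> 1" using dN by (cases N) auto
  have Apos: "A_cyc m > 0" using A_ge1[of m] by simp
  have "C_cyc m \<ge> 0" using C_ge[of m 0] order.trans[of 0 "ereal (norm (Psi m $ 0))" "C_cyc m"] by simp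
  show ?thesis
  proof (cases "C_cyc m = \<infinity>")
    case True
    have "ereal (real N) * ereal (A_cyc m) = ereal (real N * A_cyc m)" by simp
    moreover have "real N * A_cyc m > 0" using N1 Apos by simp
    ultimately have "ereal (real N) * ereal (A_cyc m) * C_cyc m = \<infinity>" using True N1 Apos by simp
    then show ?thesis by (metis ereal_less_eq(1))
  next
    case False
    with \<open>C_cyc m \<ge> 0\<close> obtain c where c: "C_cyc m = ereal c" "c \<ge> 0"
      by (cases "C_cyc m") auto
    have cb: "norm (Psi m $ n) \<le> c" for n using C_ge[of m n] c by simp
    define d where "d = degree (cyclo m)"
    have coef: "norm (Psi (m*q) $ j) \<le> real N * A_cyc m * c" for j
    proof -
      let ?P = "\<lambda>i. i \<le> d \<and> q dvd (j - i)"
      have "Psi (m*q) $ j = (\<Sum>i=0..j. coeff (cyclo m) i * spread q (Psi m) $ (j - i))"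
        unfolding Psi_rel[OF m q nd] fps_mult_nth by simp
      then have "norm (Psi (m*q) $ j) \<le> (\<Sum>i=0..j. norm (coeff (cyclo m) i) * norm (spread q (Psi m) $ (j - i)))"
        by (simp add: norm_mult[symmetric] norm_sum)
      also have "\<dots> \<le> (\<Sum>i=0..j. if ?P i then A_cyc m * c else 0)"
      proof (rule sum_mono)
        fix i assume "i \<in> {0..j}"
        show "norm (coeff (cyclo m) i) * norm (spread q (Psi m) $ (j - i)) \<le> (if ?P i then A_cyc m * c else 0)"
        proof (cases "?P i")
          case True
          have "norm (spread q (Psi m) $ (j - i)) \<le> c" using cb c by (simp add: spread_nth)
          then show ?thesis using True A_ge[of m i] by (simp add: mult_mono Apos less_imp_le)
        next
          case False
          then have "coeff (cyclo m) i = 0 \<or> spread q (Psi m) $ (j - i) = 0"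
            by (auto simp: d_def coeff_eq_0 spread_nth)
          then show ?thesis using False by auto
        qed
      qed
      also have "\<dots> = (\<Sum>i\<in>{i\<in>{0..j}. ?P i}. A_cyc m * c)"
        by (rule sum.inter_filter[symmetric]) simp
      also have "\<dots> = real (card {i\<in>{0..j}. ?P i}) * (A_cyc m * c)" by simp
      also have "\<dots> \<le> real N * (A_cyc m * c)"
        using card_residue_bound[OF q0, of d N j] dN c Apos unfolding d_def
        by (intro mult_right_mono) auto
      finally show ?thesis by (simp add: mult.assoc)
    qed
    have "C_cyc (m*q) \<le> ereal (real N * A_cyc m * c)"
      unfolding C_cyc_def by (rule SUP_least) (use coef in simp)
    then show ?thesis using c by simp
  qed
qed






lemma A_le1: "(\<And>i. norm (coeff (cyclo n) i) \<le> 1) \<Longrightarrow> A_cyc n \<le> 1"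
  unfolding A_cyc_def A_set by (subst Max_le_iff) auto

lemma Sset_1: "Sset 1 = {1}" by (auto simp: Sset_def)

lemma zeta_1: "zeta 1 1 = 1" unfolding zeta_def by simp

lemma Sset_1': "Sset (Suc 0) = {Suc 0}" by (auto simp: Sset_def)
lemma zeta_1': "zeta (Suc 0) (Suc 0) = 1" unfolding zeta_def by simp

lemma cyclo_1: "cyclo 1 = [:-1, 1:]"
  unfolding cyclo_def' by (simp add: Sset_1' zeta_1')

lemma cyclo_1': "cyclo (Suc 0) = [:-1, 1:]" using cyclo_1 by simp

lemma Psi_1: "Psi 1 = - Abs_fps (\<lambda>n. 1)"
proof -
  have "inverse (Abs_fps (\<lambda>n. 1::complex)) * Abs_fps (\<lambda>n. 1) = 1"
    by (rule inverse_mult_eq_1) simp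
  then have "(1 - fps_X) * Abs_fps (\<lambda>n. 1::complex) = 1"
    by (simp only: fps_inverse_gp')
  moreover have "[:-1, 1::complex:] = [:0,1:] - 1" by (simp add: one_pCons)
  then have "fps_of_poly (cyclo 1) = fps_X - 1" unfolding cyclo_1 by (simp add: fps_of_poly_diff)
  ultimately have "fps_of_poly (cyclo 1) * (- Abs_fps (\<lambda>n. 1)) = 1"
    by (simp only: mult_minus_right mult_minus_left[symmetric] minus_diff_eq)
  then show ?thesis unfolding Psi_def by (rule fps_inverse_unique)
qed

lemma C_1: "C_cyc 1 \<le> 1"
  unfolding C_cyc_def Psi_1 by (rule SUP_least) simp

lemma A_1: "A_cyc 1 \<le> 1"
proof (rule A_le1)
  fix i show "norm (coeff (cyclo 1) i) \<le> 1"
    unfolding cyclo_1 by (cases i) (auto simp: coeff_pCons split: nat.split)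
qed

lemma C_nonneg: "0 \<le> C_cyc m"
  using C_ge[of m 0] order.trans[of 0 "ereal (norm (Psi m $ 0))" "C_cyc m"] by simp

lemma ereal_prod_le1:
  assumes "0 \<le> a" "a \<le> 1" "0 \<le> x" "x \<le> (1::ereal)"
  shows "ereal a * x \<le> 1"
proof -
  obtain r where r: "x = ereal r" using assms by (cases x) auto
  then have "0 \<le> r" "r \<le> 1" using assms by auto
  then have "a * r \<le> 1" using assms by (simp add: mult_le_one)
  then show ?thesis using r by simp
qed

lemma A_nonneg: "0 \<le> A_cyc m" using A_ge1[of m] by simp

lemma geom_poly: "(\<Sum>i<p. monom (1::complex) i) * [:-1, 1:] = monom 1 p - 1"
proof -
  have l: "[:-1, 1:] = monom (1::complex) 1 - 1" by (simp add: monom_altdef one_pCons)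
  have "(\<Sum>i<p. monom (1::complex) i) * [:-1, 1:] = (\<Sum>i<p. monom 1 (Suc i) - monom 1 i)"
  proof -
    have "(\<Sum>i<p. monom (1::complex) i) * monom 1 1 = (\<Sum>i<p. monom 1 (Suc i))"
      by (simp add: sum_distrib_right mult_monom)
    then show ?thesis unfolding l right_diff_distrib by (simp add: sum_subtractf)
  qed
  also have "\<dots> = monom 1 p - monom 1 0" by (rule sum_lessThan_telescope)
  also have m0: "monom (1::complex) 0 = 1" by (simp add: monom_0 one_pCons)
  then have "monom 1 p - monom (1::complex) 0 = monom 1 p - 1" by (simp only:)
  finally show ?thesis .
qed

lemma cyclo_prime: "prime p \<Longrightarrow> cyclo p = (\<Sum>i<p. monom 1 i)"
proof -
  assume p: "prime p"
  have "\<not> p dvd 1" using p by (metis not_prime_1 nat_dvd_1_iff_1)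
  from key_identity[of 1 p, OF _ p this]
  have "cyclo p * cyclo 1 = monom 1 p - 1" by (simp add: Sset_1 zeta_1 Sset_1' zeta_1' one_pCons)
  also have "\<dots> = (\<Sum>i<p. monom 1 i) * cyclo 1" unfolding cyclo_1 geom_poly ..
  finally have "cyclo p * cyclo 1 = (\<Sum>i<p. monom 1 i) * cyclo 1" .
  moreover have "cyclo 1 \<noteq> 0" by (simp add: cyclo_1 cyclo_1')
  ultimately show ?thesis by (metis mult_right_cancel)
qed

lemma A_prime: "prime p \<Longrightarrow> A_cyc p \<le> 1"
  by (rule A_le1) (simp add: cyclo_prime coeff_sum coeff_monom)

lemma C_prime: "prime p \<Longrightarrow> C_cyc p \<le> 1"
proof -
  assume p: "prime p"
  have "\<not> p dvd 1" using p by (metis not_prime_1 nat_dvd_1_iff_1)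
  moreover have "degree (cyclo 1) < 1 * p" using p prime_gt_1_nat[of p] by (simp add: cyclo_1 cyclo_1')
  ultimately have "C_cyc (1*p) \<le> ereal (real 1) * ereal (A_cyc 1) * C_cyc 1"
    using C_rel[of 1 p 1] p by simp
  also have "\<dots> \<le> 1" using A_1 C_1 C_nonneg[of 1] A_nonneg[of 1]
    by (simp add: ereal_prod_le1)
  finally show ?thesis by simp
qed

lemma C_two:
  assumes p: "prime p" and q: "prime q" and pq: "p < q"
  shows "C_cyc (p*q) \<le> 1"
proof -
  have "\<not> q dvd p" using pq p by (simp add: nat_dvd_not_less prime_gt_0_nat)
  moreover have "degree (cyclo p) < 1 * q" using degree_cyclo_le[of p] pq by simp
  ultimately have "C_cyc (p*q) \<le> ereal (real 1) * ereal (A_cyc p) * C_cyc p"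
    using C_rel[of p q 1] p q by (simp add: prime_gt_0_nat)
  also have "\<dots> \<le> 1" using A_prime[OF p] C_prime[OF p] C_nonneg[of p] A_nonneg[of p]
    by (simp add: ereal_prod_le1)
  finally show ?thesis by simp
qed




lemma ereal_prod_nonneg:
  fixes f :: "'a \<Rightarrow> ereal"
  shows "(\<And>j. j \<in> A \<Longrightarrow> 0 \<le> f j) \<Longrightarrow> 0 \<le> prod f A"
proof (induction A rule: infinite_finite_induct)
  case (insert x F)
  then have "0 \<le> f x" "0 \<le> prod f F" by auto
  then have "0 * prod f F \<le> f x * prod f F" by (intro ereal_mult_right_mono)
  then show ?case using insert by simp
qed auto

lemma opi_mono: "odd_primes_incr k p \<Longrightarrow> j \<le> k \<Longrightarrow> odd_primes_incr j p"
  unfolding odd_primes_incr_def by auto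

lemma opi_prime: "odd_primes_incr k p \<Longrightarrow> 1 \<le> i \<Longrightarrow> i \<le> k \<Longrightarrow> prime (p i)"
  unfolding odd_primes_incr_def by auto

lemma opi_less: "odd_primes_incr k p \<Longrightarrow> 1 \<le> i \<Longrightarrow> i < j \<Longrightarrow> j \<le> k \<Longrightarrow> p i < p j"
  unfolding odd_primes_incr_def by auto

lemma P_pos: "odd_primes_incr k p \<Longrightarrow> n \<le> k \<Longrightarrow> (\<Prod>i=1..n. p i) > 0"
  by (rule prod_pos) (auto dest: opi_prime prime_gt_0_nat)

lemma not_dvd_P:
  assumes "odd_primes_incr (Suc n) p"
  shows "\<not> p (Suc n) dvd (\<Prod>i=1..n. p i)"
proof
  assume "p (Suc n) dvd (\<Prod>i=1..n. p i)"
  then obtain i where i: "i \<in> {1..n}" "p (Suc n) dvd p i"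
    using prime_dvd_prod_iff[of "{1..n}" "p (Suc n)" p] opi_prime[OF assms, of "Suc n"] by auto
  have "p (Suc n) = p i" using i opi_prime[OF assms, of i] opi_prime[OF assms, of "Suc n"]
    by (simp add: primes_dvd_imp_eq)
  moreover have "p i < p (Suc n)" using opi_less[OF assms, of i "Suc n"] i by auto
  ultimately show False by simp
qed

lemma part1:
  assumes "odd_primes_incr (Suc (Suc (Suc r))) p"
  shows "C_cyc (\<Prod>i=1..Suc (Suc (Suc r)). p i) \<le>
     ereal (real (\<Prod>i=1..Suc r. p i)) * ereal (A_cyc (\<Prod>i=1..Suc (Suc r). p i))
               * C_cyc (\<Prod>i=1..Suc (Suc r). p i)"
proof -
  let ?m = "\<Prod>i=1..Suc (Suc r). p i"
  let ?N = "\<Prod>i=1..Suc r. p i"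
  let ?q = "p (Suc (Suc (Suc r)))"
  have m: "?m > 0" by (rule P_pos[OF assms]) simp
  have q: "prime ?q" using opi_prime[OF assms] by simp
  have nd: "\<not> ?q dvd ?m" using not_dvd_P[OF assms] .
  have N: "?N > 0" by (rule P_pos[OF assms]) simp
  have mN: "?m = ?N * p (Suc (Suc r))" by (simp add: prod.nat_ivl_Suc' mult.commute)
  have "p (Suc (Suc r)) < ?q" using opi_less[OF assms, of "Suc (Suc r)" "Suc (Suc (Suc r))"] by simp
  then have "?N * p (Suc (Suc r)) < ?N * ?q" using N by simp
  then have "degree (cyclo ?m) < ?N * ?q" using degree_cyclo_le[of ?m] mN by linarith
  from C_rel[OF m q nd this]
  have "C_cyc (?m * ?q) \<le> ereal (real ?N) * ereal (A_cyc ?m) * C_cyc ?m" .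
  moreover have "(\<Prod>i=1..Suc (Suc (Suc r)). p i) = ?m * ?q" by (simp add: prod.nat_ivl_Suc')
  ultimately show ?thesis by simp
qed




lemma pow_step: "i \<le> r \<Longrightarrow> (x::nat) ^ (2 ^ (Suc (Suc (Suc r)) - i - 1) - 1) = x * (x ^ (2 ^ (Suc (Suc r) - i - 1) - 1))^2"
proof -
  assume i: "i \<le> r"
  define e where "e = Suc r - i"
  have e1: "Suc (Suc (Suc r)) - i - 1 = Suc e" "Suc (Suc r) - i - 1 = e" using i by (auto simp: e_def)
  define y where "y = (2::nat) ^ e"
  have "y \<ge> 1" by (simp add: y_def)
  moreover have "(2::nat) ^ Suc e = 2 * y" by (simp add: y_def)
  ultimately have "(2::nat) ^ Suc e - 1 = 1 + 2 * (2 ^ e - 1)" unfolding y_def[symmetric] by linarith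
  then show ?thesis unfolding e1 by (simp add: power_mult[symmetric] power_add mult.commute)
qed

lemma M_step: "M_k (Suc (Suc (Suc r))) p = (\<Prod>i=1..Suc r. p i) * (M_k (Suc (Suc r)) p)^2"
proof -
  have "M_k (Suc (Suc (Suc r))) p = (\<Prod>i=1..Suc r. p i ^ (2 ^ (Suc (Suc (Suc r)) - i - 1) - 1))"
    by (simp add: M_k_def)
  also have "\<dots> = p (Suc r) * (\<Prod>i=1..r. p i ^ (2 ^ (Suc (Suc (Suc r)) - i - 1) - 1))"
    by (simp add: prod.nat_ivl_Suc')
  also have "(\<Prod>i=1..r. p i ^ (2 ^ (Suc (Suc (Suc r)) - i - 1) - 1))
      = (\<Prod>i=1..r. p i * (p i ^ (2 ^ (Suc (Suc r) - i - 1) - 1))^2)"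
    by (rule prod.cong[OF refl]) (rule pow_step, simp)
  also have "\<dots> = (\<Prod>i=1..r. p i) * (\<Prod>i=1..r. p i ^ (2 ^ (Suc (Suc r) - i - 1) - 1))^2"
    by (simp add: prod.distrib power_mult_distrib prod_power_distrib)
  also have "(\<Prod>i=1..r. p i ^ (2 ^ (Suc (Suc r) - i - 1) - 1)) = M_k (Suc (Suc r)) p"
    by (simp add: M_k_def)
  finally show ?thesis by (simp add: prod.nat_ivl_Suc' mult.assoc)
qed

lemma M_pos: "odd_primes_incr k p \<Longrightarrow> M_k k p > 0"
  unfolding M_k_def by (rule prod_pos) (auto dest: opi_prime prime_gt_0_nat)

lemma A_le_eps:
  assumes "odd_primes_incr k p"
  shows "ereal (A_cyc (\<Prod>i=1..k. p i)) \<le> eps_A k * ereal (real (M_k k p))"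
proof -
  let ?A = "A_cyc (\<Prod>i=1..k. p i)" and ?M = "real (M_k k p)"
  have M: "?M > 0" using M_pos[OF assms] by simp
  have "ereal (?A / ?M) \<le> eps_A k" unfolding eps_A_def by (rule SUP_upper) (use assms in simp)
  then have "ereal (?A / ?M) * ereal ?M \<le> eps_A k * ereal ?M" by (rule ereal_mult_right_mono) simp
  then show ?thesis using M by simp
qed

lemma eps_nonneg:
  assumes "odd_primes_incr k p"
  shows "0 \<le> eps_A k"
proof -
  have "ereal (A_cyc (\<Prod>i=1..k. p i) / real (M_k k p)) \<le> eps_A k"
    unfolding eps_A_def by (rule SUP_upper) (use assms in simp)
  moreover have "0 \<le> A_cyc (\<Prod>i=1..k. p i) / real (M_k k p)" using A_nonneg by simp
  ultimately show ?thesis by (meson ereal_less_eq(5) order.trans)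
qed

lemma ereal_rearr: "ereal n * (e * ereal m) * (ereal m * E) = ereal (n * (m*m)) * (e * E)"
  by (simp add: mult_ac)

lemma part2:
  "odd_primes_incr (Suc (Suc r)) p \<Longrightarrow>
    C_cyc (\<Prod>i=1..Suc (Suc r). p i) \<le> ereal (real (M_k (Suc (Suc r)) p)) * (\<Prod>j=2..Suc r. eps_A j)"
proof (induction r)
  case 0
  have p: "prime (p 1)" "prime (p 2)" "p 1 < p 2"
    using opi_prime[OF 0, of 1] opi_prime[OF 0, of 2] opi_less[OF 0, of 1 2] by auto
  have "(\<Prod>i=1..Suc (Suc 0). p i) = p 1 * p 2" by (simp add: prod.nat_ivl_Suc' numeral_2_eq_2)
  then show ?case using C_two[OF p] by (simp add: M_k_def numeral_2_eq_2 one_ereal_def)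
next
  case (Suc r)
  let ?k = "Suc (Suc (Suc r))"
  have o2: "odd_primes_incr (Suc (Suc r)) p" using opi_mono[OF Suc.prems] by simp
  let ?E = "\<Prod>j=2..Suc r. eps_A j"
  let ?M = "ereal (real (M_k (Suc (Suc r)) p))"
  let ?N = "ereal (real (\<Prod>i=1..Suc r. p i))"
  let ?A = "A_cyc (\<Prod>i=1..Suc (Suc r). p i)"
  let ?C = "C_cyc (\<Prod>i=1..Suc (Suc r). p i)"
  have E0: "0 \<le> ?E"
    by (rule ereal_prod_nonneg) (auto intro: eps_nonneg[OF opi_mono[OF Suc.prems]])
  have e0: "0 \<le> eps_A (Suc (Suc r))" by (rule eps_nonneg[OF o2])
  have "C_cyc (\<Prod>i=1..?k. p i) \<le> ?N * ereal ?A * ?C" by (rule part1[OF Suc.prems])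
  also have "\<dots> \<le> ?N * (eps_A (Suc (Suc r)) * ?M) * (?M * ?E)"
  proof (rule ereal_mult_mono')
    show "0 \<le> ?N * ereal ?A" using A_nonneg[of "\<Prod>i=1..Suc (Suc r). p i"] by (simp add: zero_ereal_def) (intro mult_nonneg_nonneg prod_nonneg; simp)
    show "0 \<le> ?C" by (rule C_nonneg)
    show "?N * ereal ?A \<le> ?N * (eps_A (Suc (Suc r)) * ?M)"
      by (rule ereal_mult_left_mono[OF A_le_eps[OF o2]]) (simp only: zero_ereal_def ereal_less_eq of_nat_0_le_iff)
    show "?C \<le> ?M * ?E" by (rule Suc.IH[OF o2])
  qed
  also have "\<dots> = ereal (real (\<Prod>i=1..Suc r. p i) * (real (M_k (Suc (Suc r)) p) * real (M_k (Suc (Suc r)) p))) * (eps_A (Suc (Suc r)) * ?E)"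
    by (rule ereal_rearr)
  also have "real (\<Prod>i=1..Suc r. p i) * (real (M_k (Suc (Suc r)) p) * real (M_k (Suc (Suc r)) p)) = real (M_k ?k p)"
    by (simp only: M_step of_nat_mult power2_eq_square)
  also have "eps_A (Suc (Suc r)) * ?E = (\<Prod>j=2..Suc (Suc r). eps_A j)"
    by (rule prod.nat_ivl_Suc'[symmetric]) simp
  finally show ?case .
qed




theorem mainTheorem11:
  fixes k :: nat
  assumes "k \<ge> 3"
  shows "(\<forall>p. odd_primes_incr k p \<longrightarrow>
           C_cyc (\<Prod>i=1..k. p i) \<le>
             ereal (real (\<Prod>i=1..k-2. p i)) * ereal (A_cyc (\<Prod>i=1..k-1. p i))
               * C_cyc (\<Prod>i=1..k-1. p i))
       \<and> eps_inv k \<le> (\<Prod>j=2..k-1. eps_A j)"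
proof -
  have "\<exists>r. k = Suc (Suc (Suc r))" using assms by presburger
  then obtain r where k: "k = Suc (Suc (Suc r))" by blast
  have k2: "k - 2 = Suc r" "k - 1 = Suc (Suc r)" using k by auto
  have P1: "\<forall>p. odd_primes_incr k p \<longrightarrow>
           C_cyc (\<Prod>i=1..k. p i) \<le>
             ereal (real (\<Prod>i=1..k-2. p i)) * ereal (A_cyc (\<Prod>i=1..k-1. p i))
               * C_cyc (\<Prod>i=1..k-1. p i)"
    unfolding k2 unfolding k using part1 by blast
  have P2: "eps_inv k \<le> (\<Prod>j=2..k-1. eps_A j)"
    unfolding eps_inv_def
  proof (rule SUP_least)
    fix p assume "p \<in> {p. odd_primes_incr k p}"
    then have o: "odd_primes_incr (Suc (Suc (Suc r))) p" using k by simp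
    have M: "ereal (real (M_k k p)) > 0" using M_pos[OF o] k by simp
    have "C_cyc (\<Prod>i=1..k. p i) \<le> ereal (real (M_k k p)) * (\<Prod>j=2..k-1. eps_A j)"
      using part2[OF o] unfolding k2 unfolding k by simp
    then show "C_cyc (\<Prod>i=1..k. p i) / ereal (real (M_k k p)) \<le> (\<Prod>j=2..k-1. eps_A j)"
      using ereal_divide_le_pos[OF M] by simp
  qed
  show ?thesis using P1 P2 by blast
qed


end
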